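(* Let $M\in\mathbb N$ and let real numbers $Q_k,\hat Q_k$, $0\le k\le M$, be given. Let $\theta_n,\tilde\theta_n$ ($0\le n\le M$) be the unique reals such that $$\sum_{k\le M}Q_k\binom{h_k}{0}+\hat Q_k\binom{0}{\hat h_k}=\sum_{n\le M}\theta_n\binom{f_n}{g_n}+\tilde\theta_n\binom{\tilde f_n}{\tilde g_n}.$$ Then there are real coefficients $A_{n+2j,n},B_{n+2j,n},\tilde A_{n+2j,n},\tilde B_{n+2j,n}$ depending only on $p,q,\mu$ such that $$\theta_n=\sum_{j=0}^{[\frac{M-n}2]}A_{n+2j,n}Q_{n+2j}+B_{n+2j,n}\hat Q_{n+2j},\qquad \tilde\theta_n=\sum_{j=0}^{[\frac{M-n}2]}\tilde A_{n+2j,n}Q_{n+2j}+\tilde B_{n+2j,n}\hat Q_{n+2j},$$ and in particular $$A_{n,n}=\frac{q}{\Gamma(2pq+p+q)},\quad B_{n,n}=\frac{p}{\gamma(2pq+p+q)},\quad A_{n+2,n}=-\frac{\tilde e_{n+2,n}}{\Gamma\gamma(2pq+p+q)},\quad B_{n+2,n}=\frac{p+1}{q+1}\,\frac{\tilde e_{n+2,n}}{\gamma^2(2pq+p+q)},$$ where $\tilde e_{n+2,n}=(n+2)(n+1)\frac{pq\gamma(q+1)(1-\mu)}{3pq+p+q-1}$.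
   Context: One space dimension; $p,q>1$, $\mu>0$; $\Gamma,\gamma>0$ with $\gamma^p=\Gamma\frac{p+1}{pq-1}$, $\Gamma^q=\gamma\frac{q+1}{pq-1}$. $h_n(y)=\sum_{j\le n/2}\frac{n!}{(n-2j)!j!}(-1)^jy^{n-2j}$ and $\hat h_n(y)=\sum_{j\le n/2}\frac{n!}{(n-2j)!j!}(-1)^j\mu^jy^{n-2j}$. The pairs $(f_n,g_n)$ and $(\tilde f_n,\tilde g_n)$ are the polynomial eigenvectors of degree $n$ of $\mathscr H+\mathcal M$ (with $\mathscr H=\mathrm{diag}(\frac{d^2}{dy^2}-\frac y2\frac d{dy},\ \mu\frac{d^2}{dy^2}-\frac y2\frac d{dy})$ and $\mathcal M=\begin{pmatrix}-\frac{p+1}{pq-1}&p\gamma^{p-1}\\ q\Gamma^{q-1}&-\frac{q+1}{pq-1}\end{pmatrix}$) with eigenvalues $1-\frac n2$ and $-(\frac n2+\frac{(p+1)(q+1)}{pq-1})$ respectively, normalized so that the leading coefficients are $((p+1)\Gamma,(q+1)\gamma)$ and $(p\Gamma,-q\gamma)$ respectively; each is a combination of $\binom{h_{n-2j}}{0},\binom{0}{\hat h_{n-2j}}$, $0\le j\le n/2$. *)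

theory Defs
  imports Complex_Main "HOL-Computational_Algebra.Polynomial"
begin

definition hp :: "nat \<Rightarrow> real poly" where
  "hp n = (\<Sum>j\<le>n div 2. monom (fact n / (fact (n - 2*j) * fact j) * (-1)^j) (n - 2*j))"

definition hhp :: "real \<Rightarrow> nat \<Rightarrow> real poly" where
  "hhp mu n = (\<Sum>j\<le>n div 2. monom (fact n / (fact (n - 2*j) * fact j) * (-1)^j * mu^j) (n - 2*j))"

definition Lop :: "real \<Rightarrow> real poly \<Rightarrow> real poly" where
  "Lop d f = smult d (pderiv (pderiv f)) - smult (1/2) ([:0, 1:] * pderiv f)"

definition is_poly_eigvec ::
  "real \<Rightarrow> real \<Rightarrow> real \<Rightarrow> real \<Rightarrow> real \<Rightarrow> real \<Rightarrow> nat \<Rightarrow> real \<Rightarrow> real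
    \<Rightarrow> real poly \<Rightarrow> real poly \<Rightarrow> bool" where
  "is_poly_eigvec p q mu Gam gam lam n a b f g \<longleftrightarrow>
     (\<exists>c d. f = (\<Sum>j\<le>n div 2. smult (c j) (hp (n - 2*j))) \<and>
            g = (\<Sum>j\<le>n div 2. smult (d j) (hhp mu (n - 2*j)))) \<and>
     coeff f n = a \<and> coeff g n = b \<and>
     Lop 1 f + smult (- (p+1)/(p*q-1)) f + smult (p * gam powr (p-1)) g = smult lam f \<and>
     Lop mu g + smult (q * Gam powr (q-1)) f + smult (- (q+1)/(p*q-1)) g = smult lam g"

definition e_tilde :: "real \<Rightarrow> real \<Rightarrow> real \<Rightarrow> real \<Rightarrow> nat \<Rightarrow> real" where
  "e_tilde p q mu gam n =
     real (n+2) * real (n+1) * (p*q*gam*(q+1)*(1-mu) / (3*p*q+p+q-1))"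

end

theory Submission imports Defs "HOL-Library.Product_Plus" begin


type_synonym m4 = "real \<times> real \<times> real \<times> real"

definition mv :: "m4 \<Rightarrow> real \<times> real \<Rightarrow> real \<times> real" where
  "mv A v = (fst A * fst v + fst (snd A) * snd v, fst (snd (snd A)) * fst v + snd (snd (snd A)) * snd v)"

definition mm :: "m4 \<Rightarrow> m4 \<Rightarrow> m4" where
  "mm A B = (fst A * fst B + fst (snd A) * fst (snd (snd B)),
             fst A * fst (snd B) + fst (snd A) * snd (snd (snd B)),
             fst (snd (snd A)) * fst B + snd (snd (snd A)) * fst (snd (snd B)),
             fst (snd (snd A)) * fst (snd B) + snd (snd (snd A)) * snd (snd (snd B)))"

definition mdet :: "m4 \<Rightarrow> real" where
  "mdet A = fst A * snd (snd (snd A)) - fst (snd A) * fst (snd (snd A))"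

definition minv :: "m4 \<Rightarrow> m4" where
  "minv A = (snd (snd (snd A)) / mdet A, - fst (snd A) / mdet A, - fst (snd (snd A)) / mdet A, fst A / mdet A)"

lemma mv_zero_mat[simp]: "mv 0 v = 0" by (simp add: mv_def zero_prod_def)
lemma mv_zero[simp]: "mv A 0 = 0" by (simp add: mv_def zero_prod_def)
lemma mv_add: "mv A (v + w) = mv A v + mv A w"
  by (simp add: mv_def algebra_simps prod_eq_iff)
lemma mv_diff: "mv A (v - w) = mv A v - mv A w"
  by (simp add: mv_def algebra_simps prod_eq_iff)
lemma mv_mat_add: "mv (A + B) v = mv A v + mv B v"
  by (simp add: mv_def algebra_simps prod_eq_iff)
lemma mv_mat_diff: "mv (A - B) v = mv A v - mv B v"
  by (simp add: mv_def algebra_simps prod_eq_iff)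
lemma mv_sum: "mv A (\<Sum>i\<in>S. v i) = (\<Sum>i\<in>S. mv A (v i))"
  by (induction S rule: infinite_finite_induct) (auto simp: mv_add)
lemma mv_mat_sum: "mv (\<Sum>i\<in>S. A i) v = (\<Sum>i\<in>S. mv (A i) v)"
  by (induction S rule: infinite_finite_induct) (auto simp: mv_mat_add)
lemma mv_mm: "mv (mm A B) v = mv A (mv B v)"
  by (simp add: mv_def mm_def algebra_simps prod_eq_iff)
lemma minv_mv: "mdet A \<noteq> 0 \<Longrightarrow> mv (minv A) (mv A v) = v"
proof -
  obtain a b c d where A: "A = (a,b,c,d)" by (cases A) auto
  obtain x y where v: "v = (x,y)" by (cases v) auto
  assume "mdet A \<noteq> 0"
  then have D: "a*d - b*c \<noteq> 0" by (simp add: A mdet_def)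
  define DD where "DD = a*d - b*c"
  have DD: "DD \<noteq> 0" using D by (simp add: DD_def)
  have 1: "d/DD*(a*x+b*y) + -b/DD*(c*x+d*y) = x"
  proof -
    have "d/DD*(a*x+b*y) + -b/DD*(c*x+d*y) = (d*(a*x+b*y) - b*(c*x+d*y))/DD"
      using DD by (simp add: field_simps)
    also have "d*(a*x+b*y) - b*(c*x+d*y) = DD*x" by (simp add: DD_def algebra_simps)
    finally show ?thesis using DD by simp
  qed
  have 2: "-c/DD*(a*x+b*y) + a/DD*(c*x+d*y) = y"
  proof -
    have "-c/DD*(a*x+b*y) + a/DD*(c*x+d*y) = (a*(c*x+d*y) - c*(a*x+b*y))/DD"
      using DD by (simp add: field_simps)
    also have "a*(c*x+d*y) - c*(a*x+b*y) = DD*y" by (simp add: DD_def algebra_simps)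
    finally show ?thesis using DD by simp
  qed
  show ?thesis using 1 2 by (simp add: A v mv_def minv_def mdet_def DD_def)
qed

function Rc :: "(nat \<Rightarrow> nat \<Rightarrow> m4) \<Rightarrow> (nat \<Rightarrow> nat \<Rightarrow> m4) \<Rightarrow> m4 \<Rightarrow> nat \<Rightarrow> nat \<Rightarrow> m4" where
  "Rc F Hd L m s = mm (minv L) (Hd (m+2*s) m - (\<Sum>i\<in>{1..s}. mm (F (m+2*i) m) (Rc F Hd L (m+2*i) (s-i))))"
  by pat_completeness auto
termination by (relation "measure (\<lambda>(F,Hd,L,m,s). s)") auto

declare Rc.simps[simp del]

lemma sum_parity_reindex:
  fixes G :: "nat \<Rightarrow> 'a::comm_monoid_add"
  assumes "m \<le> M" "\<And>n. n \<le> M \<Longrightarrow> \<not>(m \<le> n \<and> even (n-m)) \<Longrightarrow> G n = 0"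
  shows "(\<Sum>n\<le>M. G n) = (\<Sum>i\<le>(M-m) div 2. G (m+2*i))"
proof -
  have inj: "inj_on (\<lambda>i. m+2*i) {..(M-m) div 2}" by (auto simp: inj_on_def)
  have "(\<Sum>i\<le>(M-m) div 2. G (m+2*i)) = sum G ((\<lambda>i. m+2*i) ` {..(M-m) div 2})"
    by (simp add: sum.reindex[OF inj])
  also have "\<dots> = (\<Sum>n\<le>M. G n)"
  proof (rule sum.mono_neutral_left)
    show "(\<lambda>i. m+2*i) ` {..(M-m) div 2} \<subseteq> {..M}" using assms(1) by auto
    show "\<forall>i\<in>{..M} - (\<lambda>i. m + 2 * i) ` {..(M - m) div 2}. G i = 0"
    proof
      fix n assume n: "n \<in> {..M} - (\<lambda>i. m + 2 * i) ` {..(M - m) div 2}"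
      have "\<not>(m \<le> n \<and> even (n-m))"
      proof
        assume h: "m \<le> n \<and> even (n-m)"
        then obtain j where j: "n - m = 2*j" by (meson evenE)
        have "n = m + 2*j" "j \<le> (M-m) div 2" using h j n by auto
        thus False using n by auto
      qed
      thus "G n = 0" using assms(2) n by auto
    qed
  qed auto
  finally show ?thesis by simp
qed

lemma sum_triangle:
  fixes g :: "nat \<Rightarrow> nat \<Rightarrow> 'a::comm_monoid_add"
  shows "(\<Sum>i\<in>{1..K}. \<Sum>s\<le>K-i. g i (i+s)) = (\<Sum>t\<le>K. \<Sum>i\<in>{1..t}. g i t)"
proof (induction K)
  case 0 then show ?case by simp
next
  case (Suc K)
  have "(\<Sum>i\<in>{1..Suc K}. \<Sum>s\<le>Suc K-i. g i (i+s)) = (\<Sum>i\<in>{1..K}. \<Sum>s\<le>Suc K-i. g i (i+s)) + g (Suc K) (Suc K)"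
    by (simp add: sum.cl_ivl_Suc)
  also have "(\<Sum>i\<in>{1..K}. \<Sum>s\<le>Suc K-i. g i (i+s)) = (\<Sum>i\<in>{1..K}. (\<Sum>s\<le>K-i. g i (i+s)) + g i (Suc K))"
  proof (rule sum.cong)
    fix i assume i: "i \<in> {1..K}"
    then have "Suc K - i = Suc (K - i)" by auto
    then show "(\<Sum>s\<le>Suc K-i. g i (i+s)) = (\<Sum>s\<le>K-i. g i (i+s)) + g i (Suc K)"
      using i by (simp add: sum.atMost_Suc)
  qed simp
  also have "\<dots> = (\<Sum>i\<in>{1..K}. \<Sum>s\<le>K-i. g i (i+s)) + (\<Sum>i\<in>{1..K}. g i (Suc K))"
    by (simp add: sum.distrib)
  finally show ?case using Suc by (simp add: sum.atMost_Suc sum.cl_ivl_Suc add.assoc)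
qed




lemma sum_single_nat:
  fixes F :: "nat \<Rightarrow> 'a::comm_monoid_add"
  assumes "finite A" "a \<in> A" "\<And>x. x \<in> A \<Longrightarrow> x \<noteq> a \<Longrightarrow> F x = 0"
  shows "sum F A = F a"
proof -
  have "sum F A = F a + sum F (A - {a})" using assms by (simp add: sum.remove)
  also have "sum F (A - {a}) = 0" using assms by (intro sum.neutral) auto
  finally show ?thesis by simp
qed

lemma coeff_hp: "coeff (hp k) m = (\<Sum>j\<le>k div 2. if k - 2*j = m then fact k / (fact (k - 2*j) * fact j) * (-1)^j else 0)"
  unfolding hp_def coeff_sum coeff_monom by (rule refl)

lemma coeff_hhp: "coeff (hhp mu k) m = (\<Sum>j\<le>k div 2. if k - 2*j = m then fact k / (fact (k - 2*j) * fact j) * (-1)^j * mu^j else 0)"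
  unfolding hhp_def coeff_sum coeff_monom by (rule refl)

lemma two_le: "(j::nat) \<le> k div 2 \<Longrightarrow> 2*j \<le> k"
  using div_times_less_eq_dividend[of k 2] by linarith

lemma par_aux: "(j::nat) \<le> k div 2 \<Longrightarrow> k - 2*j = m \<Longrightarrow> m \<le> k \<and> even (k-m)"
proof -
  assume a: "j \<le> k div 2" "k - 2*j = m"
  have "2*j \<le> k" using two_le[OF a(1)] .
  then have "k - m = 2*j" using a(2) by linarith
  then show ?thesis using a(2) by simp
qed

lemma coeff_hp_zero: "\<not>(m \<le> k \<and> even (k-m)) \<Longrightarrow> coeff (hp k) m = 0"
  unfolding coeff_hp
proof (rule sum.neutral, rule ballI)
  fix j assume nm: "\<not>(m \<le> k \<and> even (k-m))" and "j \<in> {..k div 2}"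
  then have "j \<le> k div 2" by simp
  then have "k - 2*j \<noteq> m" using par_aux nm by blast
  then show "(if k - 2*j = m then fact k / (fact (k - 2*j) * fact j) * (-1)^j else 0) = 0" by simp
qed

lemma coeff_hhp_zero: "\<not>(m \<le> k \<and> even (k-m)) \<Longrightarrow> coeff (hhp mu k) m = 0"
  unfolding coeff_hhp
proof (rule sum.neutral, rule ballI)
  fix j assume nm: "\<not>(m \<le> k \<and> even (k-m))" and "j \<in> {..k div 2}"
  then have "j \<le> k div 2" by simp
  then have "k - 2*j \<noteq> m" using par_aux nm by blast
  then show "(if k - 2*j = m then fact k / (fact (k - 2*j) * fact j) * (-1)^j * mu^j else 0) = 0" by simp
qed

lemma coeff_hp_self: "coeff (hp k) k = 1"
  unfolding coeff_hp by (subst sum_single_nat[where a=0]) auto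

lemma coeff_hhp_self: "coeff (hhp mu k) k = 1"
  unfolding coeff_hhp by (subst sum_single_nat[where a=0]) auto

lemma coeff_hp_2: "coeff (hp (n+2)) n = - (real (n+2) * real (n+1))"
proof -
  have "coeff (hp (n+2)) n = (if n + 2 - 2*1 = n then fact (n+2) / (fact (n + 2 - 2*1) * fact 1) * (-1::real)^1 else 0)"
    unfolding coeff_hp by (rule sum_single_nat) auto
  also have "\<dots> = - (fact (n+2) / fact n)" by simp
  also have "fact (n+2) = real (n+2) * real (n+1) * (fact n :: real)"
    by (simp add: fact_Suc numeral_2_eq_2)
  finally show ?thesis by simp
qed

lemma coeff_hhp_2: "coeff (hhp mu (n+2)) n = - (mu * real (n+2) * real (n+1))"
proof -
  have "coeff (hhp mu (n+2)) n = (if n + 2 - 2*1 = n then fact (n+2) / (fact (n + 2 - 2*1) * fact 1) * (-1::real)^1 * mu^1 else 0)"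
    unfolding coeff_hhp by (rule sum_single_nat) auto
  also have "\<dots> = - (fact (n+2) / fact n) * mu" by simp
  also have "fact (n+2) = real (n+2) * real (n+1) * (fact n :: real)"
    by (simp add: fact_Suc numeral_2_eq_2)
  finally show ?thesis by simp
qed

lemma par_aux2:
  assumes "(j::nat) \<le> n div 2" "\<not>(m \<le> n \<and> even (n-m))"
  shows "\<not>(m \<le> n - 2*j \<and> even (n - 2*j - m))"
proof
  assume h: "m \<le> n - 2*j \<and> even (n - 2*j - m)"
  have j2: "2*j \<le> n" using two_le[OF assms(1)] .
  have hm: "m \<le> n - 2*j" using h by blast
  have e: "n - m = (n - 2*j - m) + 2*j" using hm j2 by linarith
  have "even (n - m)" unfolding e using h by simp
  moreover have "m \<le> n" using hm by (meson diff_le_self le_trans)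
  ultimately show False using assms(2) by simp
qed

lemma span_hp_zero:
  assumes "f = (\<Sum>j\<le>n div 2. smult (c j) (hp (n - 2*j)))" "\<not>(m \<le> n \<and> even (n-m))"
  shows "coeff f m = 0"
  unfolding assms(1) coeff_sum coeff_smult
proof (rule sum.neutral, rule ballI)
  fix j assume "j \<in> {..n div 2}"
  then have "j \<le> n div 2" by simp
  from par_aux2[OF this assms(2)] show "c j * coeff (hp (n - 2*j)) m = 0" by (simp add: coeff_hp_zero)
qed

lemma span_hhp_zero:
  assumes "f = (\<Sum>j\<le>n div 2. smult (c j) (hhp mu (n - 2*j)))" "\<not>(m \<le> n \<and> even (n-m))"
  shows "coeff f m = 0"
  unfolding assms(1) coeff_sum coeff_smult
proof (rule sum.neutral, rule ballI)
  fix j assume "j \<in> {..n div 2}"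
  then have "j \<le> n div 2" by simp
  from par_aux2[OF this assms(2)] show "c j * coeff (hhp mu (n - 2*j)) m = 0" by (simp add: coeff_hhp_zero)
qed

lemma x_mult: "[:0, 1:] * (h::real poly) = pCons 0 h"
  by (simp add: mult_pCons_left)

lemma coeff_x_pderiv: "coeff ([:0, 1:] * pderiv (f::real poly)) n = real n * coeff f n"
  unfolding x_mult by (cases n) (simp_all add: coeff_pCons coeff_pderiv)

lemma coeff_pderiv2: "coeff (pderiv (pderiv (f::real poly))) n = real (n+2) * real (n+1) * coeff f (n+2)"
  by (simp add: coeff_pderiv algebra_simps)

lemma coeff_Lop: "coeff (Lop d f) n = d * real (n+2) * real (n+1) * coeff f (n+2) - real n / 2 * coeff f n"
  unfolding Lop_def coeff_diff coeff_smult coeff_x_pderiv coeff_pderiv2 by simp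




lemma final_alg0:
  fixes p q mu G g c S D :: real
  assumes G: "G > 0" and g: "g > 0" and S: "S > 0" and D: "D > 0"
    and q1: "q + 1 \<noteq> 0" and Sdef: "S = 2*p*q+p+q" and Ddef: "D = 3*p*q+p+q-1"
  defines "a \<equiv> q/(G*S)" and "b \<equiv> p/(g*S)" and "cc \<equiv> (q+1)/(G*S)" and "d \<equiv> -(p+1)/(g*S)"
    and "x \<equiv> - c*G*(1+p*mu)" and "xt \<equiv> - c*p*G*((2*p*q+p-1) + (p+1)*q*mu)/D"
    and "z \<equiv> - c*g*(mu+q)" and "zt \<equiv> c*q*g*((2*p*q+q-1)*mu + p*(q+1))/D"
  shows "fst (mm (a,b,cc,d) ((-c,0,0,-(mu*c)) - mm (x,xt,z,zt) (a,b,cc,d))) = - (c * (p*q*g*(q+1)*(1-mu) / D)) / (G*g*S)"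
    and "fst (snd (mm (a,b,cc,d) ((-c,0,0,-(mu*c)) - mm (x,xt,z,zt) (a,b,cc,d)))) = (p+1)/(q+1) * (c * (p*q*g*(q+1)*(1-mu) / D)) / (g^2*S)"
proof -
  have "fst (mm (a,b,cc,d) ((-c,0,0,-(mu*c)) - mm (x,xt,z,zt) (a,b,cc,d))) = a * (-c - (x*a + xt*cc)) + b * (-(z*a + zt*cc))"
    "fst (snd (mm (a,b,cc,d) ((-c,0,0,-(mu*c)) - mm (x,xt,z,zt) (a,b,cc,d)))) = a * (-(x*b + xt*d)) + b * (-(mu*c) - (z*b + zt*d))"
    by (simp_all add: mm_def)
  moreover have "a * (-c - (x*a + xt*cc)) + b * (-(z*a + zt*cc)) = - (c * (p*q*g*(q+1)*(1-mu) / D)) / (G*g*S)"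
    unfolding a_def b_def cc_def d_def x_def xt_def z_def zt_def using G g S D
    apply (simp add: field_simps)
    unfolding Sdef Ddef by algebra
  moreover have "a * (-(x*b + xt*d)) + b * (-(mu*c) - (z*b + zt*d)) = (p+1)/(q+1) * (c * (p*q*g*(q+1)*(1-mu) / D)) / (g^2*S)"
  proof -
    have r0: "(p+1)/(q+1) * (c * (p*q*g*(q+1)*(1-mu) / D)) = (p+1) * (c * (p*q*g*(1-mu) / D))"
    proof -
      have gen: "\<And>Y. (p+1)/(q+1) * ((q+1)*Y) = (p+1)*Y" using q1 by (simp add: field_simps)
      have "c * (p*q*g*(q+1)*(1-mu) / D) = (q+1) * (c * (p*q*g*(1-mu) / D))" by (simp add: algebra_simps)
      then show ?thesis using gen by simp
    qed
    have r: "(p+1)/(q+1) * (c * (p*q*g*(q+1)*(1-mu) / D)) / (g^2*S) = (p+1)*c*p*q*(1-mu)/(D*g*S)"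
      unfolding r0 using g D S by (simp add: field_simps power2_eq_square)
    have "a * (-(x*b + xt*d)) + b * (-(mu*c) - (z*b + zt*d)) = (p+1)*c*p*q*(1-mu)/(D*g*S)"
      unfolding a_def b_def cc_def d_def x_def xt_def z_def zt_def using G g S D
      apply (simp add: field_simps)
      unfolding Sdef Ddef by algebra
    then show ?thesis using r by simp
  qed
  ultimately show "fst (mm (a,b,cc,d) ((-c,0,0,-(mu*c)) - mm (x,xt,z,zt) (a,b,cc,d))) = - (c * (p*q*g*(q+1)*(1-mu) / D)) / (G*g*S)"
    "fst (snd (mm (a,b,cc,d) ((-c,0,0,-(mu*c)) - mm (x,xt,z,zt) (a,b,cc,d)))) = (p+1)/(q+1) * (c * (p*q*g*(q+1)*(1-mu) / D)) / (g^2*S)"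
    by simp_all
qed




lemma lin_uniq:
  fixes a11 a12 a21 a22 x z x0 z0 :: real
  assumes "a11*x + a12*z = a11*x0 + a12*z0" "a21*x + a22*z = a21*x0 + a22*z0" "a11*a22 - a12*a21 \<noteq> 0"
  shows "x = x0 \<and> z = z0"
proof -
  have e1: "a11*(x-x0) + a12*(z-z0) = 0" "a21*(x-x0) + a22*(z-z0) = 0" using assms(1,2) by (simp_all add: algebra_simps)
  have "(a11*a22 - a12*a21)*(x-x0) = a22*(a11*(x-x0) + a12*(z-z0)) - a12*(a21*(x-x0) + a22*(z-z0))"
    by (simp add: algebra_simps)
  also have "\<dots> = 0" using e1 by simp
  finally have 1: "x = x0" using assms(3) by simp
  have "(a11*a22 - a12*a21)*(z-z0) = a11*(a21*(x-x0) + a22*(z-z0)) - a21*(a11*(x-x0) + a12*(z-z0))"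
    by (simp add: algebra_simps)
  also have "\<dots> = 0" using e1 by simp
  finally have 2: "z = z0" using assms(3) by simp
  show ?thesis using 1 2 by simp
qed

lemma eig_low:
  assumes "is_poly_eigvec p q mu Gam gam lam (n+2) a b f g"
  shows "real (n+2)*real (n+1)*a - real n/2*coeff f n + (-(p+1))/(p*q-1)*coeff f n + p*gam powr (p-1)*coeff g n = lam*coeff f n"
    and "mu*(real (n+2)*real (n+1))*b - real n/2*coeff g n + q*Gam powr (q-1)*coeff f n + (-(q+1))/(p*q-1)*coeff g n = lam*coeff g n"
proof -
  from assms have cf: "coeff f (n+2) = a" "coeff g (n+2) = b"
    and e1: "Lop 1 f + smult (- (p+1)/(p*q-1)) f + smult (p * gam powr (p-1)) g = smult lam f"
    and e2: "Lop mu g + smult (q * Gam powr (q-1)) f + smult (- (q+1)/(p*q-1)) g = smult lam g"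
    unfolding is_poly_eigvec_def by auto
  from arg_cong[OF e1, of "\<lambda>P. coeff P n"] show "real (n+2)*real (n+1)*a - real n/2*coeff f n + (-(p+1))/(p*q-1)*coeff f n + p*gam powr (p-1)*coeff g n = lam*coeff f n"
    using cf by (simp add: coeff_Lop)
  from arg_cong[OF e2, of "\<lambda>P. coeff P n"] show "mu*(real (n+2)*real (n+1))*b - real n/2*coeff g n + q*Gam powr (q-1)*coeff f n + (-(q+1))/(p*q-1)*coeff g n = lam*coeff g n"
    using cf by (simp add: coeff_Lop)
qed

lemma powr_rel:
  fixes x y p k :: real
  assumes "x > 0" "x powr p = y * k"
  shows "x powr (p-1) = y*k/x"
  using assms by (simp add: powr_diff)

lemma low1:
  fixes p q mu Gam gam :: real
  assumes p: "p > 1" and q: "q > 1" and G: "Gam > 0" and g: "gam > 0"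
    and r1: "gam powr p = Gam * (p+1)/(p*q-1)" and r2: "Gam powr q = gam * (q+1)/(p*q-1)"
    and e: "is_poly_eigvec p q mu Gam gam (1 - real (n+2) / 2) (n+2) ((p+1)*Gam) ((q+1)*gam) f g"
  shows "coeff f n = - (real (n+2)*real (n+1))*Gam*(1+p*mu) \<and> coeff g n = - (real (n+2)*real (n+1))*gam*(mu+q)"
proof -
  define k where "k = p*q-1"
  have k: "k > 0" using p q unfolding k_def by (smt (verit) mult_less_cancel_right1 mult_pos_pos)
  define c where "c = real (n+2)*real (n+1)"
  have pw1: "gam powr (p-1) = Gam*(p+1)/k/gam" using r1 g by (simp add: powr_diff k_def)
  have pw2: "Gam powr (q-1) = gam*(q+1)/k/Gam" using r2 G by (simp add: powr_diff k_def)
  note E = eig_low[OF e, folded k_def c_def, unfolded pw1 pw2]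
  define x where "x = coeff f n"
  define z where "z = coeff g n"
  have lx: "(1 - real (n+2)/2) * x = - (real n / 2 * x)" by (simp add: field_simps)
  have lz: "(1 - real (n+2)/2) * z = - (real n / 2 * z)" by (simp add: field_simps)
  have E1: "(-(p+1)/k)*x + (p*(Gam*(p+1)/k/gam))*z = - (c*((p+1)*Gam))"
    using E(1)[folded x_def z_def] lx by linarith
  have E2: "(q*(gam*(q+1)/k/Gam))*x + (-(q+1)/k)*z = - (mu*c*((q+1)*gam))"
    using E(2)[folded x_def z_def] lz by linarith
  have C1: "(-(p+1)/k)*(-c*Gam*(1+p*mu)) + (p*(Gam*(p+1)/k/gam))*(-c*gam*(mu+q)) = - (c*((p+1)*Gam))"
    using k G g by (simp add: field_simps) (simp add: k_def algebra_simps)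
  have C2: "(q*(gam*(q+1)/k/Gam))*(-c*Gam*(1+p*mu)) + (-(q+1)/k)*(-c*gam*(mu+q)) = - (mu*c*((q+1)*gam))"
    using k G g by (simp add: field_simps) (simp add: k_def algebra_simps)
  have det: "(-(p+1)/k)*(-(q+1)/k) - (p*(Gam*(p+1)/k/gam))*(q*(gam*(q+1)/k/Gam)) \<noteq> 0"
  proof -
    have "(-(p+1)/k)*(-(q+1)/k) - (p*(Gam*(p+1)/k/gam))*(q*(gam*(q+1)/k/Gam)) = - ((p+1)*(q+1)/k)"
      using k G g by (simp add: field_simps) (simp add: k_def algebra_simps)
    then show ?thesis using p q k by simp
  qed
  from lin_uniq[OF E1[folded C1] E2[folded C2] det] show ?thesis unfolding x_def z_def c_def by simp
qed


lemma low2: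
  fixes p q mu Gam gam :: real
  assumes p: "p > 1" and q: "q > 1" and G: "Gam > 0" and g: "gam > 0"
    and r1: "gam powr p = Gam * (p+1)/(p*q-1)" and r2: "Gam powr q = gam * (q+1)/(p*q-1)"
    and e: "is_poly_eigvec p q mu Gam gam (- (real (n+2) / 2 + (p+1)*(q+1)/(p*q-1))) (n+2) (p*Gam) (- (q*gam)) f g"
  shows "coeff f n = - (real (n+2)*real (n+1))*p*Gam*((2*p*q+p-1) + (p+1)*q*mu)/(3*p*q+p+q-1)
       \<and> coeff g n = (real (n+2)*real (n+1))*q*gam*((2*p*q+q-1)*mu + p*(q+1))/(3*p*q+p+q-1)"
proof -
  define k where "k = p*q-1"
  have k: "k > 0" using p q unfolding k_def by (smt (verit) mult_less_cancel_right1 mult_pos_pos)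
  define D where "D = 3*p*q+p+q-1"
  have D: "D > 0" using p q unfolding D_def by (smt (verit) mult_less_cancel_right1 mult_pos_pos)
  define c where "c = real (n+2)*real (n+1)"
  have pw1: "gam powr (p-1) = Gam*(p+1)/k/gam" using r1 g by (simp add: powr_diff k_def)
  have pw2: "Gam powr (q-1) = gam*(q+1)/k/Gam" using r2 G by (simp add: powr_diff k_def)
  note E = eig_low[OF e, folded k_def c_def, unfolded pw1 pw2]
  define x where "x = coeff f n"
  define z where "z = coeff g n"
  define a11 where "a11 = (p+1)*(q+1)/k + 1 - (p+1)/k"
  define a22 where "a22 = (p+1)*(q+1)/k + 1 - (q+1)/k"
  have lx: "(- (real (n+2)/2 + (p+1)*(q+1)/k)) * x = - (real n / 2 * x) - x - (p+1)*(q+1)/k*x"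
    by (simp add: algebra_simps add_divide_distrib)
  have lz: "(- (real (n+2)/2 + (p+1)*(q+1)/k)) * z = - (real n / 2 * z) - z - (p+1)*(q+1)/k*z"
    by (simp add: algebra_simps add_divide_distrib)
  have E1': "(p+1)*(q+1)/k*x + x + (-(p+1)/k*x) + (p*(Gam*(p+1)/k/gam))*z = - (c*(p*Gam))"
    using E(1)[folded x_def z_def] lx by linarith
  have E2': "(q*(gam*(q+1)/k/Gam))*x + ((p+1)*(q+1)/k*z + z + (-(q+1)/k*z)) = - (mu*c*(-(q*gam)))"
    using E(2)[folded x_def z_def] lz by linarith
  have E1: "a11*x + (p*(Gam*(p+1)/k/gam))*z = - (c*(p*Gam))"
  proof -
    have "a11*x = (p+1)*(q+1)/k*x + x + (-(p+1)/k*x)" unfolding a11_def using k by (simp add: field_simps)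
    then show ?thesis using E1' by linarith
  qed
  have E2: "(q*(gam*(q+1)/k/Gam))*x + a22*z = - (mu*c*(-(q*gam)))"
  proof -
    have "a22*z = (p+1)*(q+1)/k*z + z + (-(q+1)/k*z)" unfolding a22_def using k by (simp add: field_simps)
    then show ?thesis using E2' by linarith
  qed
  have C1: "a11*(- c*p*Gam*((2*p*q+p-1) + (p+1)*q*mu)/D) + (p*(Gam*(p+1)/k/gam))*(c*q*gam*((2*p*q+q-1)*mu + p*(q+1))/D) = - (c*(p*Gam))"
    using k G g D unfolding a11_def by (simp add: field_simps) (simp add: k_def D_def algebra_simps)
  have C2: "(q*(gam*(q+1)/k/Gam))*(- c*p*Gam*((2*p*q+p-1) + (p+1)*q*mu)/D) + a22*(c*q*gam*((2*p*q+q-1)*mu + p*(q+1))/D) = - (mu*c*(-(q*gam)))"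
    using k G g D unfolding a22_def by (simp add: field_simps) (simp add: k_def D_def algebra_simps)
  have det: "a11*a22 - (p*(Gam*(p+1)/k/gam))*(q*(gam*(q+1)/k/Gam)) \<noteq> 0"
  proof -
    have "a11*a22 - (p*(Gam*(p+1)/k/gam))*(q*(gam*(q+1)/k/Gam)) = D/k"
      using k G g unfolding a11_def a22_def by (simp add: field_simps) (simp add: k_def D_def algebra_simps)
    then show ?thesis using D k by simp
  qed
  from lin_uniq[OF E1[folded C1] E2[folded C2] det] show ?thesis unfolding x_def z_def c_def D_def by simp
qed




lemma sum_split0:
  fixes g :: "nat \<Rightarrow> 'a::comm_monoid_add"
  shows "(\<Sum>i\<le>K. g i) = g 0 + (\<Sum>i\<in>{1..K}. g i)"
proof -
  have "{..K} = insert 0 {1..K}" by auto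
  then show ?thesis by simp
qed

lemma div_sub2:
  assumes "2*i \<le> (a::nat)"
  shows "(a - 2*i) div 2 = a div 2 - i"
proof -
  have "a div 2 = ((a - 2*i) + i*2) div 2" using assms by simp
  also have "\<dots> = (a - 2*i) div 2 + i" by simp
  finally show ?thesis by simp
qed

lemma mm_id: "mm A (1,0,0,1) = A"
  by (simp add: mm_def)

theorem mainTheorem4:
  fixes p q mu Gam gam :: real and f g ft gt :: "nat \<Rightarrow> real poly"
  assumes "p > 1" and "q > 1" and "mu > 0" and "Gam > 0" and "gam > 0"
    and "gam powr p = Gam * (p+1)/(p*q-1)" and "Gam powr q = gam * (q+1)/(p*q-1)"
    and "\<forall>n. is_poly_eigvec p q mu Gam gam (1 - real n / 2) n ((p+1)*Gam) ((q+1)*gam) (f n) (g n)"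
    and "\<forall>n. is_poly_eigvec p q mu Gam gam (- (real n / 2 + (p+1)*(q+1)/(p*q-1))) n
               (p*Gam) (- (q*gam)) (ft n) (gt n)"
  shows "\<exists>A B At Bt :: nat \<Rightarrow> nat \<Rightarrow> real.
    (\<forall>(M::nat) (Q::nat\<Rightarrow>real) (Qh::nat\<Rightarrow>real) (th::nat\<Rightarrow>real) (tht::nat\<Rightarrow>real).
        (\<Sum>k\<le>M. smult (Q k) (hp k)) = (\<Sum>n\<le>M. smult (th n) (f n) + smult (tht n) (ft n)) \<and>
        (\<Sum>k\<le>M. smult (Qh k) (hhp mu k)) = (\<Sum>n\<le>M. smult (th n) (g n) + smult (tht n) (gt n))
        \<longrightarrow> (\<forall>n\<le>M.
              th n = (\<Sum>j\<le>(M-n) div 2. A (n+2*j) n * Q (n+2*j) + B (n+2*j) n * Qh (n+2*j)) \<and>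
              tht n = (\<Sum>j\<le>(M-n) div 2. At (n+2*j) n * Q (n+2*j) + Bt (n+2*j) n * Qh (n+2*j)))) \<and>
    (\<forall>n. A n n = q / (Gam * (2*p*q+p+q)) \<and>
         B n n = p / (gam * (2*p*q+p+q)) \<and>
         A (n+2) n = - e_tilde p q mu gam n / (Gam * gam * (2*p*q+p+q)) \<and>
         B (n+2) n = (p+1)/(q+1) * e_tilde p q mu gam n / (gam^2 * (2*p*q+p+q)))"
proof -
  note hp1 = assms(1) and hq1 = assms(2) and hG = assms(4) and hg = assms(5)
  define Fm where "Fm = (\<lambda>n m. (coeff (f n) m, coeff (ft n) m, coeff (g n) m, coeff (gt n) m))"
  define Hd where "Hd = (\<lambda>k m. (coeff (hp k) m, 0::real, 0::real, coeff (hhp mu k) m))"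
  define L where "L = ((p+1)*Gam, p*Gam, (q+1)*gam, -(q*gam))"
  define R where "R = Rc Fm Hd L"
  define A where "A = (\<lambda>x n. fst (R n ((x-n) div 2)))"
  define B where "B = (\<lambda>x n. fst (snd (R n ((x-n) div 2))))"
  define At where "At = (\<lambda>x n. fst (snd (snd (R n ((x-n) div 2)))))"
  define Bt where "Bt = (\<lambda>x n. snd (snd (snd (R n ((x-n) div 2)))))"
  define S where "S = 2*p*q+p+q"
  have S: "S > 0" using hp1 hq1 unfolding S_def by (smt (verit) mult_pos_pos)
  have Rsimp: "\<And>m s. R m s = mm (minv L) (Hd (m+2*s) m - (\<Sum>i\<in>{1..s}. mm (Fm (m+2*i) m) (R (m+2*i) (s-i))))"
    unfolding R_def by (rule Rc.simps)
  have ef: "\<And>n. is_poly_eigvec p q mu Gam gam (1 - real n / 2) n ((p+1)*Gam) ((q+1)*gam) (f n) (g n)"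
    using assms(8) by blast
  have eft: "\<And>n. is_poly_eigvec p q mu Gam gam (- (real n / 2 + (p+1)*(q+1)/(p*q-1))) n (p*Gam) (- (q*gam)) (ft n) (gt n)"
    using assms(9) by blast
  have Fz: "Fm n m = 0" if nm: "\<not>(m \<le> n \<and> even (n-m))" for n m
  proof -
    from ef[of n] obtain c d where c: "f n = (\<Sum>j\<le>n div 2. smult (c j) (hp (n - 2*j)))"
      and d: "g n = (\<Sum>j\<le>n div 2. smult (d j) (hhp mu (n - 2*j)))"
      unfolding is_poly_eigvec_def by blast
    from eft[of n] obtain ct dt where ct: "ft n = (\<Sum>j\<le>n div 2. smult (ct j) (hp (n - 2*j)))"
      and dt: "gt n = (\<Sum>j\<le>n div 2. smult (dt j) (hhp mu (n - 2*j)))"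
      unfolding is_poly_eigvec_def by blast
    show ?thesis unfolding Fm_def
      using span_hp_zero[OF c nm] span_hhp_zero[OF d nm] span_hp_zero[OF ct nm] span_hhp_zero[OF dt nm]
      by (simp add: zero_prod_def)
  qed
  have Hz: "Hd k m = 0" if nm: "\<not>(m \<le> k \<and> even (k-m))" for k m
    unfolding Hd_def using coeff_hp_zero[OF nm] coeff_hhp_zero[OF nm] by (simp add: zero_prod_def)
  have Fdiag: "Fm n n = L" for n
    using ef[of n] eft[of n] unfolding Fm_def L_def is_poly_eigvec_def by simp
  have detL: "mdet L = - (Gam*gam*S)" unfolding L_def mdet_def S_def by (simp add: algebra_simps)
  have detL0: "mdet L \<noteq> 0" using detL hG hg S by simp
  have minvL: "minv L = (q/(Gam*S), p/(gam*S), (q+1)/(Gam*S), -(p+1)/(gam*S))"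
    unfolding minv_def detL using hG hg S by (simp add: L_def field_simps)
  have R0: "R n 0 = minv L" for n
    using Rsimp[of n 0] by (simp add: Hd_def coeff_hp_self coeff_hhp_self mm_id)

  have part1: "\<forall>n\<le>M. th n = (\<Sum>j\<le>(M-n) div 2. A (n+2*j) n * Q (n+2*j) + B (n+2*j) n * Qh (n+2*j)) \<and>
              tht n = (\<Sum>j\<le>(M-n) div 2. At (n+2*j) n * Q (n+2*j) + Bt (n+2*j) n * Qh (n+2*j))"
    if eq1: "(\<Sum>k\<le>M. smult (Q k) (hp k)) = (\<Sum>n\<le>M. smult (th n) (f n) + smult (tht n) (ft n))"
    and eq2: "(\<Sum>k\<le>M. smult (Qh k) (hhp mu k)) = (\<Sum>n\<le>M. smult (th n) (g n) + smult (tht n) (gt n))"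
    for M Q Qh th tht
  proof -
    define v where "v = (\<lambda>k. (Q k, Qh k))"
    define X where "X = (\<lambda>n. (th n, tht n))"
    have ceq: "(\<Sum>k\<le>M. mv (Hd k m) (v k)) = (\<Sum>n\<le>M. mv (Fm n m) (X n))" for m
    proof -
      from arg_cong[OF eq1, of "\<lambda>P. coeff P m"]
      have c1: "(\<Sum>k\<le>M. Q k * coeff (hp k) m) = (\<Sum>n\<le>M. th n * coeff (f n) m + tht n * coeff (ft n) m)"
        by (simp add: coeff_sum)
      from arg_cong[OF eq2, of "\<lambda>P. coeff P m"]
      have c2: "(\<Sum>k\<le>M. Qh k * coeff (hhp mu k) m) = (\<Sum>n\<le>M. th n * coeff (g n) m + tht n * coeff (gt n) m)"
        by (simp add: coeff_sum)
      show ?thesis using c1 c2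
        by (simp add: prod_eq_iff fst_sum snd_sum mv_def Hd_def Fm_def v_def X_def mult.commute)
    qed
    have IHform: "X m = (\<Sum>s\<le>(M-m) div 2. mv (R m s) (v (m+2*s)))" if "m \<le> M" for m
      using that
    proof (induction "M - m" arbitrary: m rule: less_induct)
      case less
      define K where "K = (M - m) div 2"
      have s1: "(\<Sum>k\<le>M. mv (Hd k m) (v k)) = (\<Sum>i\<le>K. mv (Hd (m+2*i) m) (v (m+2*i)))"
        unfolding K_def by (rule sum_parity_reindex) (use less.prems Hz in auto)
      have s2: "(\<Sum>n\<le>M. mv (Fm n m) (X n)) = (\<Sum>i\<le>K. mv (Fm (m+2*i) m) (X (m+2*i)))"
        unfolding K_def by (rule sum_parity_reindex) (use less.prems Fz in auto)
      have s3: "(\<Sum>i\<le>K. mv (Fm (m+2*i) m) (X (m+2*i))) = mv L (X m) + (\<Sum>i\<in>{1..K}. mv (Fm (m+2*i) m) (X (m+2*i)))"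
        by (subst sum_split0) (simp add: Fdiag)
      have IHi: "X (m+2*i) = (\<Sum>s\<le>K-i. mv (R (m+2*i) s) (v (m+2*i+2*s)))" if i: "i \<in> {1..K}" for i
      proof -
        have i1: "1 \<le> i" "i \<le> K" using i by auto
        have t2: "2*i \<le> M - m" using two_le[of i "M-m"] i1 unfolding K_def by simp
        have le: "m + 2*i \<le> M" using t2 less.prems by linarith
        have "M - (m+2*i) = (M - m) - 2*i" by simp
        then have dv: "(M - (m+2*i)) div 2 = K - i" using div_sub2[OF t2] unfolding K_def by simp
        have "M - (m+2*i) < M - m" using le i1 by linarith
        from less.hyps[OF this le] show ?thesis unfolding dv by (simp add: add.assoc)
      qed
      define gg where "gg = (\<lambda>i t. mv (mm (Fm (m+2*i) m) (R (m+2*i) (t-i))) (v (m+2*t)))"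
      have dbl: "(\<Sum>i\<in>{1..K}. mv (Fm (m+2*i) m) (X (m+2*i))) = (\<Sum>t\<le>K. mv (\<Sum>i\<in>{1..t}. mm (Fm (m+2*i) m) (R (m+2*i) (t-i))) (v (m+2*t)))"
      proof -
        have "(\<Sum>i\<in>{1..K}. mv (Fm (m+2*i) m) (X (m+2*i))) = (\<Sum>i\<in>{1..K}. \<Sum>s\<le>K-i. gg i (i+s))"
        proof (rule sum.cong)
          fix i assume i: "i \<in> {1..K}"
          have "mv (Fm (m+2*i) m) (X (m+2*i)) = (\<Sum>s\<le>K-i. mv (mm (Fm (m+2*i) m) (R (m+2*i) s)) (v (m+2*i+2*s)))"
            unfolding IHi[OF i] mv_sum mv_mm ..
          also have "\<dots> = (\<Sum>s\<le>K-i. gg i (i+s))"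
            unfolding gg_def by (simp add: algebra_simps)
          finally show "mv (Fm (m+2*i) m) (X (m+2*i)) = (\<Sum>s\<le>K-i. gg i (i+s))" .
        qed simp
        also have "\<dots> = (\<Sum>t\<le>K. \<Sum>i\<in>{1..t}. gg i t)" by (rule sum_triangle)
        also have "\<dots> = (\<Sum>t\<le>K. mv (\<Sum>i\<in>{1..t}. mm (Fm (m+2*i) m) (R (m+2*i) (t-i))) (v (m+2*t)))"
          unfolding gg_def mv_mat_sum ..
        finally show ?thesis .
      qed
      have hh: "(\<Sum>t\<le>K. mv (Hd (m+2*t) m) (v (m+2*t))) = mv L (X m) + (\<Sum>t\<le>K. mv (\<Sum>i\<in>{1..t}. mm (Fm (m+2*i) m) (R (m+2*i) (t-i))) (v (m+2*t)))"
        using ceq[of m] s1 s2 s3 dbl by simp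
      have "mv L (X m) = (\<Sum>t\<le>K. mv (Hd (m+2*t) m) (v (m+2*t))) - (\<Sum>t\<le>K. mv (\<Sum>i\<in>{1..t}. mm (Fm (m+2*i) m) (R (m+2*i) (t-i))) (v (m+2*t)))"
        unfolding hh by simp
      also have "\<dots> = (\<Sum>t\<le>K. mv (Hd (m+2*t) m - (\<Sum>i\<in>{1..t}. mm (Fm (m+2*i) m) (R (m+2*i) (t-i)))) (v (m+2*t)))"
        by (simp add: sum_subtractf mv_mat_diff)
      finally have eqL: "mv L (X m) = \<dots>" .
      have "X m = mv (minv L) (mv L (X m))" using minv_mv[OF detL0] by simp
      also have "\<dots> = (\<Sum>t\<le>K. mv (mm (minv L) (Hd (m+2*t) m - (\<Sum>i\<in>{1..t}. mm (Fm (m+2*i) m) (R (m+2*i) (t-i))))) (v (m+2*t)))"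
        unfolding eqL mv_sum mv_mm ..
      also have "\<dots> = (\<Sum>t\<le>K. mv (R m t) (v (m+2*t)))"
        unfolding Rsimp[of m, symmetric] ..
      finally show ?case unfolding K_def .
    qed
    show ?thesis
    proof (intro allI impI conjI)
      fix n assume n: "n \<le> M"
      have "th n = fst (X n)" by (simp add: X_def)
      also have "\<dots> = (\<Sum>j\<le>(M-n) div 2. A (n+2*j) n * Q (n+2*j) + B (n+2*j) n * Qh (n+2*j))"
        unfolding IHform[OF n] fst_sum by (simp add: mv_def A_def B_def v_def)
      finally show "th n = (\<Sum>j\<le>(M-n) div 2. A (n+2*j) n * Q (n+2*j) + B (n+2*j) n * Qh (n+2*j))" .
      have "tht n = snd (X n)" by (simp add: X_def)
      also have "\<dots> = (\<Sum>j\<le>(M-n) div 2. At (n+2*j) n * Q (n+2*j) + Bt (n+2*j) n * Qh (n+2*j))"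
        unfolding IHform[OF n] snd_sum by (simp add: mv_def At_def Bt_def v_def)
      finally show "tht n = (\<Sum>j\<le>(M-n) div 2. At (n+2*j) n * Q (n+2*j) + Bt (n+2*j) n * Qh (n+2*j))" .
    qed
  qed

  have part2: "A n n = q / (Gam * (2*p*q+p+q)) \<and>
         B n n = p / (gam * (2*p*q+p+q)) \<and>
         A (n+2) n = - e_tilde p q mu gam n / (Gam * gam * (2*p*q+p+q)) \<and>
         B (n+2) n = (p+1)/(q+1) * e_tilde p q mu gam n / (gam^2 * (2*p*q+p+q))" for n
  proof -
    have a1: "A n n = q / (Gam * (2*p*q+p+q))" unfolding A_def using R0[of n] by (simp add: minvL S_def)
    have b1: "B n n = p / (gam * (2*p*q+p+q))" unfolding B_def using R0[of n] by (simp add: minvL S_def)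
    define c where "c = real (n+2) * real (n+1)"
    define D where "D = 3*p*q+p+q-1"
    have D: "D > 0" using hp1 hq1 unfolding D_def by (smt (verit) mult_less_cancel_right1 mult_pos_pos)
    have l1: "coeff (f (n+2)) n = - c*Gam*(1+p*mu) \<and> coeff (g (n+2)) n = - c*gam*(mu+q)"
      using low1[OF hp1 hq1 hG hg assms(6,7) ef[of "n+2"]] unfolding c_def by simp
    have l2: "coeff (ft (n+2)) n = - c*p*Gam*((2*p*q+p-1) + (p+1)*q*mu)/D
       \<and> coeff (gt (n+2)) n = c*q*gam*((2*p*q+q-1)*mu + p*(q+1))/D"
      using low2[OF hp1 hq1 hG hg assms(6,7) eft[of "n+2"]] unfolding c_def D_def by simp
    have Fm2: "Fm (n+2) n = (- c*Gam*(1+p*mu), - c*p*Gam*((2*p*q+p-1) + (p+1)*q*mu)/D,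
               - c*gam*(mu+q), c*q*gam*((2*p*q+q-1)*mu + p*(q+1))/D)"
      unfolding Fm_def using l1 l2 by simp
    have Hd2: "Hd (n+2) n = (-c, 0, 0, -(mu*c))"
      unfolding Hd_def c_def by (simp only: coeff_hp_2 coeff_hhp_2) (simp add: algebra_simps)
    have R1: "R n 1 = mm (minv L) ((-c, 0, 0, -(mu*c)) - mm (Fm (n+2) n) (minv L))"
      using Rsimp[of n 1] R0[of "n+2"] Hd2 by simp
    have q1: "q + 1 \<noteq> 0" using hq1 by simp
    note fa = final_alg0[OF hG hg S D q1 S_def D_def, where mu=mu and c=c]
    have et: "e_tilde p q mu gam n = c * (p*q*gam*(q+1)*(1-mu) / D)"
      unfolding e_tilde_def c_def D_def by simp
    have d1: "(n + 2 - n) div 2 = 1" by simp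
    have "A (n+2) n = fst (mm (minv L) ((-c,0,0,-(mu*c)) - mm (Fm (n+2) n) (minv L)))"
      unfolding A_def d1 R1 by (rule refl)
    also have "\<dots> = - (c * (p*q*gam*(q+1)*(1-mu) / D)) / (Gam*gam*S)"
      unfolding minvL Fm2 by (rule fa(1))
    finally have a2: "A (n+2) n = - e_tilde p q mu gam n / (Gam * gam * (2*p*q+p+q))"
      unfolding et S_def .
    have "B (n+2) n = fst (snd (mm (minv L) ((-c,0,0,-(mu*c)) - mm (Fm (n+2) n) (minv L))))"
      unfolding B_def d1 R1 by (rule refl)
    also have "\<dots> = (p+1)/(q+1) * (c * (p*q*gam*(q+1)*(1-mu) / D)) / (gam^2*S)"
      unfolding minvL Fm2 by (rule fa(2))
    finally have b2: "B (n+2) n = (p+1)/(q+1) * e_tilde p q mu gam n / (gam^2 * (2*p*q+p+q))"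
      unfolding et S_def .
    show ?thesis using a1 b1 a2 b2 by simp
  qed
  show ?thesis
    apply (rule exI[of _ A], rule exI[of _ B], rule exI[of _ At], rule exI[of _ Bt])
    using part1 part2 by blast
qed


end
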